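(* Let $G$ be a connected unicyclic bipartite graph with $n$ vertices. Then $$EE(G) \ge 2\cosh(2) + (n-2),$$ with equality if and only if $G\cong C_4$.
   Context: All graphs are finite, simple and undirected. For a graph $G$ with adjacency matrix $A(G)$ having eigenvalues $\lambda_1\ge\cdots\ge\lambda_n$, the Estrada index is $EE(G)=\sum_{i=1}^n e^{\lambda_i}$. A connected graph is unicyclic if it contains exactly one cycle. $C_4$ is the cycle on 4 vertices. *)

theory Defs
  imports Complex_Main "Jordan_Normal_Form.Char_Poly"
    "HOL-Computational_Algebra.Fundamental_Theorem_Algebra"
begin

definition simple_graph :: "nat \<Rightarrow> (nat \<Rightarrow> nat \<Rightarrow> bool) \<Rightarrow> bool" where
  "simple_graph n E \<longleftrightarrow> (\<forall>i j. E i j \<longrightarrow> i < n \<and> j < n \<and> i \<noteq> j \<and> E j i)"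

definition graph_connected :: "nat \<Rightarrow> (nat \<Rightarrow> nat \<Rightarrow> bool) \<Rightarrow> bool" where
  "graph_connected n E \<longleftrightarrow> 0 < n \<and> (\<forall>i<n. \<forall>j<n. E\<^sup>*\<^sup>* i j)"

definition is_cycle :: "nat \<Rightarrow> (nat \<Rightarrow> nat \<Rightarrow> bool) \<Rightarrow> nat list \<Rightarrow> bool" where
  "is_cycle n E vs \<longleftrightarrow> length vs \<ge> 3 \<and> distinct vs \<and> set vs \<subseteq> {0..<n} \<and>
     (\<forall>i<length vs. E (vs ! i) (vs ! ((i + 1) mod length vs)))"

text \<open>The cycle as a subgraph is identified with its edge set
  (so rotations/reversals of the vertex list give the same cycle).\<close>
definition cycle_edges :: "nat list \<Rightarrow> nat set set" where
  "cycle_edges vs = {{vs ! i, vs ! ((i + 1) mod length vs)} | i. i < length vs}"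

definition graph_cycles :: "nat \<Rightarrow> (nat \<Rightarrow> nat \<Rightarrow> bool) \<Rightarrow> nat set set set" where
  "graph_cycles n E = {cycle_edges vs | vs. is_cycle n E vs}"

definition unicyclic :: "nat \<Rightarrow> (nat \<Rightarrow> nat \<Rightarrow> bool) \<Rightarrow> bool" where
  "unicyclic n E \<longleftrightarrow> graph_connected n E \<and> card (graph_cycles n E) = 1"

definition bipartite :: "nat \<Rightarrow> (nat \<Rightarrow> nat \<Rightarrow> bool) \<Rightarrow> bool" where
  "bipartite n E \<longleftrightarrow> (\<exists>f :: nat \<Rightarrow> bool. \<forall>i<n. \<forall>j<n. E i j \<longrightarrow> f i \<noteq> f j)"

definition C4 :: "nat \<Rightarrow> nat \<Rightarrow> bool" where
  "C4 a b \<longleftrightarrow> a < 4 \<and> b < 4 \<and> ((a + 1) mod 4 = b \<or> (b + 1) mod 4 = a)"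

definition isomorphic_C4 :: "nat \<Rightarrow> (nat \<Rightarrow> nat \<Rightarrow> bool) \<Rightarrow> bool" where
  "isomorphic_C4 n E \<longleftrightarrow> n = 4 \<and>
     (\<exists>p. bij_betw p {0..<4} {0..<4} \<and> (\<forall>i<4. \<forall>j<4. E i j \<longleftrightarrow> C4 (p i) (p j)))"

definition adj_matrix :: "nat \<Rightarrow> (nat \<Rightarrow> nat \<Rightarrow> bool) \<Rightarrow> real mat" where
  "adj_matrix n E = mat n n (\<lambda>(i, j). if E i j then 1 else 0)"

text \<open>Eigenvalues with algebraic multiplicity = roots of the characteristic polynomial
  (taken over the complex numbers; for the symmetric adjacency matrix they are all real).\<close>
definition eigenvalues_mset :: "real mat \<Rightarrow> complex multiset" where
  "eigenvalues_mset A = proots (char_poly (map_mat complex_of_real A))"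

definition estrada_index :: "nat \<Rightarrow> (nat \<Rightarrow> nat \<Rightarrow> bool) \<Rightarrow> real" where
  "estrada_index n E = Re (\<Sum>z\<in>#eigenvalues_mset (adj_matrix n E). exp z)"

end

theory Submission
  imports Defs "Jordan_Normal_Form.Schur_Decomposition"
begin



definition tr :: "'a::comm_ring_1 mat \<Rightarrow> 'a" where
  "tr M = (\<Sum>i\<in>{0..<dim_row M}. M $$ (i,i))"

lemma tr_mult_comm:
  fixes A B :: "'a::comm_ring_1 mat"
  assumes A: "A \<in> carrier_mat n m" and B: "B \<in> carrier_mat m n"
  shows "tr (A * B) = tr (B * A)"
proof -
  have "tr (A * B) = (\<Sum>i\<in>{0..<n}. \<Sum>k\<in>{0..<m}. A $$ (i,k) * B $$ (k,i))"
    using A B unfolding tr_def by (simp add: scalar_prod_def row_def col_def)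
  also have "\<dots> = (\<Sum>k\<in>{0..<m}. \<Sum>i\<in>{0..<n}. B $$ (k,i) * A $$ (i,k))"
    by (subst sum.swap) (simp add: mult.commute)
  also have "\<dots> = tr (B * A)"
    using A B unfolding tr_def by (simp add: scalar_prod_def row_def col_def)
  finally show ?thesis .
qed

lemma upper_tri_mult:
  fixes U V :: "'a::comm_ring_1 mat"
  assumes U: "U \<in> carrier_mat n n" and V: "V \<in> carrier_mat n n"
    and uU: "upper_triangular U" and uV: "upper_triangular V"
  shows "upper_triangular (U * V)"
    and "\<And>i. i < n \<Longrightarrow> (U * V) $$ (i,i) = U $$ (i,i) * V $$ (i,i)"
proof -
  show "upper_triangular (U * V)"
  proof (rule upper_triangularI)
    fix i j assume j: "j < i" and i: "i < dim_row (U * V)"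
    have "(U * V) $$ (i,j) = (\<Sum>k\<in>{0..<n}. U $$ (i,k) * V $$ (k,j))"
      using U V i j by (simp add: scalar_prod_def row_def col_def)
    also have "\<dots> = 0"
    proof (rule sum.neutral, intro ballI)
      fix k assume k: "k \<in> {0..<n}"
      show "U $$ (i,k) * V $$ (k,j) = 0"
      proof (cases "k < i")
        case True then show ?thesis using uU U i by (auto dest: upper_triangularD)
      next
        case False then have "j < k" using j by simp
        then show ?thesis using uV V k by (auto dest: upper_triangularD)
      qed
    qed
    finally show "(U * V) $$ (i,j) = 0" .
  qed
  fix i assume i: "i < n"
  have "(U * V) $$ (i,i) = (\<Sum>k\<in>{0..<n}. U $$ (i,k) * V $$ (k,i))"
    using U V i by (simp add: scalar_prod_def row_def col_def)
  also have "\<dots> = (\<Sum>k\<in>{i}. U $$ (i,k) * V $$ (k,i))"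
  proof (rule sum.mono_neutral_right)
    show "\<forall>k\<in>{0..<n} - {i}. U $$ (i,k) * V $$ (k,i) = 0"
    proof
      fix k assume k: "k \<in> {0..<n} - {i}"
      show "U $$ (i,k) * V $$ (k,i) = 0"
      proof (cases "k < i")
        case True then show ?thesis using uU U i by (auto dest: upper_triangularD)
      next
        case False then have "i < k" using k by simp
        then show ?thesis using uV V k by (auto dest: upper_triangularD)
      qed
    qed
  qed (use i in auto)
  also have "\<dots> = U $$ (i,i) * V $$ (i,i)" by simp
  finally show "(U * V) $$ (i,i) = U $$ (i,i) * V $$ (i,i)" .
qed

lemma upper_tri_pow:
  fixes U :: "'a::comm_ring_1 mat"
  assumes U: "U \<in> carrier_mat n n" and uU: "upper_triangular U"
  shows "upper_triangular (U ^\<^sub>m N) \<and> (\<forall>i<n. (U ^\<^sub>m N) $$ (i,i) = U $$ (i,i) ^ N)"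
proof (induction N)
  case 0
  have "upper_triangular (1\<^sub>m n :: 'a mat)" by simp
  moreover have "\<forall>i<n. (1\<^sub>m n :: 'a mat) $$ (i,i) = U $$ (i,i) ^ 0" by simp
  ultimately show ?case using U by simp
next
  case (Suc N)
  have P: "U ^\<^sub>m N \<in> carrier_mat n n" using U by simp
  have e: "U ^\<^sub>m Suc N = U ^\<^sub>m N * U" by simp
  from Suc have u1: "upper_triangular (U ^\<^sub>m N)" and d1: "\<forall>i<n. (U ^\<^sub>m N) $$ (i,i) = U $$ (i,i) ^ N"
    by auto
  note m = upper_tri_mult[OF P U u1 uU]
  show ?case unfolding e
  proof (intro conjI allI impI)
    show "upper_triangular (U ^\<^sub>m N * U)" by (rule m(1))
    fix i assume i: "i < n"
    show "(U ^\<^sub>m N * U) $$ (i,i) = U $$ (i,i) ^ Suc N"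
      using m(2)[OF i] d1 i by (simp add: mult.commute)
  qed
qed

lemma tr_pow_eigen:
  fixes A :: "complex mat"
  assumes A: "A \<in> carrier_mat n n"
    and cp: "char_poly A = (\<Prod>e\<leftarrow>es. [:- e, 1:])"
  shows "tr ((A + c \<cdot>\<^sub>m 1\<^sub>m n) ^\<^sub>m N) = (\<Sum>e\<leftarrow>es. (e + c) ^ N)"
proof -
  obtain B P Q where sch: "schur_decomposition A es = (B,P,Q)"
    by (cases "schur_decomposition A es") auto
  from schur_decomposition[OF A cp sch]
  have wit: "similar_mat_wit A B P Q" and ut: "upper_triangular B" and dg: "diag_mat B = es"
    by auto
  have dA: "n = dim_row A" using A by simp
  note d = similar_mat_witD[OF dA wit]
  have B: "B \<in> carrier_mat n n" and P: "P \<in> carrier_mat n n" and Q: "Q \<in> carrier_mat n n"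
    and PQ: "P * Q = 1\<^sub>m n" and QP: "Q * P = 1\<^sub>m n" and AB: "A = P * B * Q" using d by auto
  define C where "C = B + c \<cdot>\<^sub>m 1\<^sub>m n"
  have I: "c \<cdot>\<^sub>m 1\<^sub>m n \<in> carrier_mat n n" by simp
  have C: "C \<in> carrier_mat n n" using B by (simp add: C_def)
  have utC: "upper_triangular C" using ut B by (auto simp: C_def upper_triangular_def)
  have PC: "P * C = P * B + c \<cdot>\<^sub>m P"
  proof -
    have "P * C = P * B + P * (c \<cdot>\<^sub>m 1\<^sub>m n)" unfolding C_def by (rule mult_add_distrib_mat[OF P B I])
    also have "P * (c \<cdot>\<^sub>m 1\<^sub>m n) = c \<cdot>\<^sub>m (P * 1\<^sub>m n)" by (rule mult_smult_distrib[OF P one_carrier_mat])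
    also have "P * 1\<^sub>m n = P" by (rule right_mult_one_mat[OF P])
    finally show ?thesis .
  qed
  have PB: "P * B \<in> carrier_mat n n" using P B by simp
  have cP: "c \<cdot>\<^sub>m P \<in> carrier_mat n n" using P by simp
  have "P * C * Q = P * B * Q + (c \<cdot>\<^sub>m P) * Q" unfolding PC by (rule add_mult_distrib_mat[OF PB cP Q])
  also have "(c \<cdot>\<^sub>m P) * Q = c \<cdot>\<^sub>m (P * Q)" by (rule mult_smult_assoc_mat[OF P Q])
  finally have AC: "A + c \<cdot>\<^sub>m 1\<^sub>m n = P * C * Q" using AB PQ by simp
  have AcC: "A + c \<cdot>\<^sub>m 1\<^sub>m n \<in> carrier_mat n n" using A by simp
  have wit2: "similar_mat_wit (A + c \<cdot>\<^sub>m 1\<^sub>m n) C P Q"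
    by (rule similar_mat_witI[OF PQ QP AC AcC C P Q])
  have pw: "(A + c \<cdot>\<^sub>m 1\<^sub>m n) ^\<^sub>m N = P * (C ^\<^sub>m N) * Q"
    using similar_mat_wit_pow_id[OF wit2] .
  have CN: "C ^\<^sub>m N \<in> carrier_mat n n" using C by simp
  have PCN: "P * (C ^\<^sub>m N) \<in> carrier_mat n n" using P CN by simp
  have "tr (P * (C ^\<^sub>m N) * Q) = tr (Q * (P * (C ^\<^sub>m N)))"
    by (rule tr_mult_comm[OF PCN Q])
  also have "Q * (P * (C ^\<^sub>m N)) = (Q * P) * (C ^\<^sub>m N)"
    by (rule assoc_mult_mat[symmetric, OF Q P CN])
  also have "\<dots> = C ^\<^sub>m N" unfolding QP by (rule left_mult_one_mat[OF CN])
  finally have "tr ((A + c \<cdot>\<^sub>m 1\<^sub>m n) ^\<^sub>m N) = tr (C ^\<^sub>m N)" using pw by simp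
  also have "\<dots> = (\<Sum>i\<in>{0..<n}. (C ^\<^sub>m N) $$ (i,i))"
    using C unfolding tr_def by simp
  also have "\<dots> = (\<Sum>i\<in>{0..<n}. (C $$ (i,i)) ^ N)"
    using upper_tri_pow[OF C utC, of N] by (intro sum.cong refl) auto
  also have "\<dots> = (\<Sum>i\<in>{0..<n}. (B $$ (i,i) + c) ^ N)"
    using B by (simp add: C_def)
  also have "\<dots> = (\<Sum>e\<leftarrow>es. (e + c) ^ N)"
  proof -
    have es: "es = map (\<lambda>i. B $$ (i,i)) [0..<n]" using dg[symmetric] B unfolding diag_mat_def by simp
    show ?thesis unfolding es by (simp add: interv_sum_list_conv_sum_set_nat o_def)
  qed
  finally show ?thesis .
qed



lemma cnj_mult_self: "cnj z * z = complex_of_real ((cmod z)\<^sup>2)"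
  using complex_norm_square[of z] by (simp add: mult.commute)

lemma real_sym_eig_real:
  fixes A :: "real mat"
  assumes A: "A \<in> carrier_mat n n" and sym: "\<And>i j. i < n \<Longrightarrow> j < n \<Longrightarrow> A $$ (i,j) = A $$ (j,i)"
    and root: "poly (char_poly (map_mat complex_of_real A)) e = 0"
  shows "Im e = 0"
proof -
  let ?A = "map_mat complex_of_real A"
  have Ac: "?A \<in> carrier_mat n n" using A by simp
  have "eigenvalue ?A e" using eigenvalue_root_char_poly[OF Ac] root by simp
  then obtain v where ev: "eigenvector ?A v e" unfolding eigenvalue_def by auto
  then have v: "v \<in> carrier_vec n" and v0: "v \<noteq> 0\<^sub>v n" and Av: "?A *\<^sub>v v = e \<cdot>\<^sub>v v"
    using Ac unfolding eigenvector_def by auto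
  have comp: "\<And>i. i < n \<Longrightarrow> (\<Sum>j\<in>{0..<n}. complex_of_real (A $$ (i,j)) * v $ j) = e * v $ i"
  proof -
    fix i assume i: "i < n"
    have "(?A *\<^sub>v v) $ i = (e \<cdot>\<^sub>v v) $ i" using Av by simp
    then show "(\<Sum>j\<in>{0..<n}. complex_of_real (A $$ (i,j)) * v $ j) = e * v $ i"
      using i A v by (simp add: scalar_prod_def row_def)
  qed
  define S where "S = (\<Sum>i\<in>{0..<n}. cnj (v $ i) * (\<Sum>j\<in>{0..<n}. complex_of_real (A $$ (i,j)) * v $ j))"
  define K where "K = (\<Sum>i\<in>{0..<n}. cnj (v $ i) * v $ i)"
  have "S = (\<Sum>i\<in>{0..<n}. cnj (v $ i) * (e * v $ i))"
    unfolding S_def by (intro sum.cong refl) (simp add: comp)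
  also have "\<dots> = e * K" unfolding K_def by (simp add: sum_distrib_left mult_ac)
  finally have SK: "S = e * K" .
  have "cnj S = (\<Sum>i\<in>{0..<n}. v $ i * (\<Sum>j\<in>{0..<n}. complex_of_real (A $$ (i,j)) * cnj (v $ j)))"
    unfolding S_def by (simp add: sum_distrib_left)
  also have "\<dots> = (\<Sum>i\<in>{0..<n}. \<Sum>j\<in>{0..<n}. v $ i * complex_of_real (A $$ (i,j)) * cnj (v $ j))"
    by (simp add: sum_distrib_left mult_ac)
  also have "\<dots> = (\<Sum>j\<in>{0..<n}. \<Sum>i\<in>{0..<n}. v $ i * complex_of_real (A $$ (i,j)) * cnj (v $ j))"
    by (rule sum.swap)
  also have "\<dots> = (\<Sum>j\<in>{0..<n}. \<Sum>i\<in>{0..<n}. cnj (v $ j) * (complex_of_real (A $$ (j,i)) * v $ i))"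
    by (intro sum.cong refl) (simp add: sym mult_ac)
  also have "\<dots> = S" unfolding S_def by (simp add: sum_distrib_left)
  finally have cS: "cnj S = S" .
  have Kr: "K = complex_of_real (\<Sum>i\<in>{0..<n}. (cmod (v $ i))\<^sup>2)"
    unfolding K_def of_real_sum by (intro sum.cong refl) (simp add: cnj_mult_self)
  have "\<exists>i<n. v $ i \<noteq> 0"
  proof (rule ccontr)
    assume "\<not> ?thesis"
    then have "v = 0\<^sub>v n" using v by (intro eq_vecI) auto
    with v0 show False by simp
  qed
  then obtain i where i: "i < n" "v $ i \<noteq> 0" by auto
  have "(cmod (v $ i))\<^sup>2 \<le> (\<Sum>i\<in>{0..<n}. (cmod (v $ i))\<^sup>2)"
    using i by (intro member_le_sum) auto
  moreover have "(cmod (v $ i))\<^sup>2 > 0" using i by simp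
  ultimately have Kpos: "(\<Sum>i\<in>{0..<n}. (cmod (v $ i))\<^sup>2) > 0" by linarith
  have "cnj e * K = e * K"
  proof -
    have "cnj (e * K) = e * K" using SK cS by simp
    then show ?thesis using Kr by simp
  qed
  moreover have "K \<noteq> 0" unfolding Kr using Kpos by (simp only: of_real_eq_0_iff)
  ultimately have "cnj e = e" by simp
  then show "Im e = 0" by (metis Reals_cnj_iff complex_is_Real_iff)
qed


definition Qf :: "nat \<Rightarrow> real mat \<Rightarrow> (nat \<Rightarrow> real) \<Rightarrow> real" where
  "Qf n M x = (\<Sum>i\<in>{0..<n}. \<Sum>j\<in>{0..<n}. x i * M $$ (i,j) * x j)"

lemma pow_mat_add:
  fixes M :: "'a::comm_ring_1 mat"
  assumes M: "M \<in> carrier_mat n n"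
  shows "M ^\<^sub>m (a + b) = M ^\<^sub>m a * M ^\<^sub>m b"
proof (induction b)
  case 0 then show ?case using M by simp
next
  case (Suc b)
  have "M ^\<^sub>m (a + Suc b) = (M ^\<^sub>m a * M ^\<^sub>m b) * M" using Suc by simp
  also have "\<dots> = M ^\<^sub>m a * (M ^\<^sub>m b * M)"
    by (rule assoc_mult_mat[of _ n n _ n _ n]) (use M in auto)
  finally show ?case by simp
qed

lemma pow_mat_comm:
  fixes M :: "'a::comm_ring_1 mat"
  assumes M: "M \<in> carrier_mat n n"
  shows "M ^\<^sub>m k * M = M * M ^\<^sub>m k"
proof (induction k)
  case 0 then show ?case using M by simp
next
  case (Suc k)
  have "M ^\<^sub>m Suc k * M = (M ^\<^sub>m k * M) * M" by simp
  also have "\<dots> = (M * M ^\<^sub>m k) * M" using Suc by simp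
  also have "\<dots> = M * (M ^\<^sub>m k * M)"
    by (rule assoc_mult_mat[of _ n n _ n _ n]) (use M in auto)
  finally show ?case by simp
qed

lemma sym_pow:
  fixes M :: "real mat"
  assumes M: "M \<in> carrier_mat n n" and sym: "\<And>i j. i < n \<Longrightarrow> j < n \<Longrightarrow> M $$ (i,j) = M $$ (j,i)"
  shows "i < n \<Longrightarrow> j < n \<Longrightarrow> (M ^\<^sub>m k) $$ (i,j) = (M ^\<^sub>m k) $$ (j,i)"
proof (induction k arbitrary: i j)
  case 0 then show ?case using M by simp
next
  case (Suc k)
  have Mk: "M ^\<^sub>m k \<in> carrier_mat n n" using M by simp
  have "(M ^\<^sub>m Suc k) $$ (i,j) = (M ^\<^sub>m k * M) $$ (i,j)" by simp
  also have "\<dots> = (\<Sum>l\<in>{0..<n}. (M ^\<^sub>m k) $$ (i,l) * M $$ (l,j))"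
    using Mk M Suc.prems by (simp add: scalar_prod_def row_def col_def)
  also have "\<dots> = (\<Sum>l\<in>{0..<n}. M $$ (j,l) * (M ^\<^sub>m k) $$ (l,i))"
    using Suc.IH Suc.prems sym by (intro sum.cong refl) (simp add: mult.commute)
  also have "\<dots> = (M * M ^\<^sub>m k) $$ (j,i)"
    using Mk M Suc.prems by (simp add: scalar_prod_def row_def col_def)
  also have "\<dots> = (M ^\<^sub>m Suc k) $$ (j,i)" using pow_mat_comm[OF M, of k] by simp
  finally show ?case .
qed

lemma cauchy_schwarz_sum:
  fixes a b :: "nat \<Rightarrow> real"
  shows "(\<Sum>i\<in>I. a i * b i)\<^sup>2 \<le> (\<Sum>i\<in>I. (a i)\<^sup>2) * (\<Sum>i\<in>I. (b i)\<^sup>2)"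
proof (cases "(\<Sum>i\<in>I. (b i)\<^sup>2) > 0")
  case False
  then have "(\<Sum>i\<in>I. (b i)\<^sup>2) = 0" by (meson not_less order_antisym sum_nonneg zero_le_power2)
  then have "infinite I \<or> (\<forall>i\<in>I. b i = 0)" 
    using sum_nonneg_eq_0_iff[of I "\<lambda>i. (b i)\<^sup>2"] by auto
  then show ?thesis by auto
next
  case True
  define r where "r = (\<Sum>i\<in>I. a i * b i) / (\<Sum>i\<in>I. (b i)\<^sup>2)"
  have "0 \<le> (\<Sum>i\<in>I. (a i - r * b i)\<^sup>2)"
    by (simp add: sum_nonneg)
  also have "\<dots> = (\<Sum>i\<in>I. (a i)\<^sup>2) - 2 * r * (\<Sum>i\<in>I. a i * b i) + r\<^sup>2 * (\<Sum>i\<in>I. (b i)\<^sup>2)"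
    by (simp add: algebra_simps power2_eq_square sum_distrib_left sum_subtractf sum.distrib)
  also have "\<dots> = (\<Sum>i\<in>I. (a i)\<^sup>2) - ((\<Sum>i\<in>I. a i * b i))\<^sup>2 / (\<Sum>i\<in>I. (b i)\<^sup>2)"
    using True by (simp add: r_def power2_eq_square)
  finally show ?thesis using True by (simp add: le_diff_eq pos_divide_le_eq)
qed

lemma qf_square:
  fixes W :: "real mat"
  assumes W: "W \<in> carrier_mat n n" and sym: "\<And>i j. i < n \<Longrightarrow> j < n \<Longrightarrow> W $$ (i,j) = W $$ (j,i)"
  shows "Qf n (W * W) x = (\<Sum>l\<in>{0..<n}. (\<Sum>j\<in>{0..<n}. W $$ (l,j) * x j)\<^sup>2)"
proof -
  have "Qf n (W * W) x = (\<Sum>i\<in>{0..<n}. \<Sum>j\<in>{0..<n}. \<Sum>l\<in>{0..<n}. x i * W $$ (i,l) * W $$ (l,j) * x j)"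
    unfolding Qf_def using W
    by (intro sum.cong refl) (simp add: scalar_prod_def row_def col_def sum_distrib_left sum_distrib_right mult_ac)
  also have "\<dots> = (\<Sum>l\<in>{0..<n}. \<Sum>i\<in>{0..<n}. \<Sum>j\<in>{0..<n}. x i * W $$ (i,l) * W $$ (l,j) * x j)"
  proof -
    have "(\<Sum>i\<in>{0..<n}. \<Sum>j\<in>{0..<n}. \<Sum>l\<in>{0..<n}. x i * W $$ (i,l) * W $$ (l,j) * x j)
        = (\<Sum>i\<in>{0..<n}. \<Sum>l\<in>{0..<n}. \<Sum>j\<in>{0..<n}. x i * W $$ (i,l) * W $$ (l,j) * x j)"
    proof (rule sum.cong[OF refl])
      fix i show "(\<Sum>j\<in>{0..<n}. \<Sum>l\<in>{0..<n}. x i * W $$ (i,l) * W $$ (l,j) * x j)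
        = (\<Sum>l\<in>{0..<n}. \<Sum>j\<in>{0..<n}. x i * W $$ (i,l) * W $$ (l,j) * x j)"
        by (rule sum.swap)
    qed
    also have "\<dots> = (\<Sum>l\<in>{0..<n}. \<Sum>i\<in>{0..<n}. \<Sum>j\<in>{0..<n}. x i * W $$ (i,l) * W $$ (l,j) * x j)"
      by (rule sum.swap)
    finally show ?thesis .
  qed
  also have "\<dots> = (\<Sum>l\<in>{0..<n}. (\<Sum>j\<in>{0..<n}. W $$ (l,j) * x j)\<^sup>2)"
  proof (intro sum.cong refl)
    fix l assume l: "l \<in> {0..<n}"
    have "(\<Sum>j\<in>{0..<n}. W $$ (l,j) * x j)\<^sup>2 = (\<Sum>i\<in>{0..<n}. W $$ (l,i) * x i) * (\<Sum>j\<in>{0..<n}. W $$ (l,j) * x j)"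
      by (simp add: power2_eq_square)
    also have "\<dots> = (\<Sum>i\<in>{0..<n}. \<Sum>j\<in>{0..<n}. x i * W $$ (i,l) * W $$ (l,j) * x j)"
      using l sym by (simp add: sum_distrib_left sum_distrib_right mult_ac)
    finally show "(\<Sum>i\<in>{0..<n}. \<Sum>j\<in>{0..<n}. x i * W $$ (i,l) * W $$ (l,j) * x j) = (\<Sum>j\<in>{0..<n}. W $$ (l,j) * x j)\<^sup>2" by simp
  qed
  finally show ?thesis .
qed

lemma qf_lin:
  fixes W :: "real mat"
  shows "Qf n W x = (\<Sum>l\<in>{0..<n}. x l * (\<Sum>j\<in>{0..<n}. W $$ (l,j) * x j))"
  unfolding Qf_def by (simp add: sum_distrib_left mult_ac)

lemma tr_square:
  fixes W :: "real mat"
  assumes W: "W \<in> carrier_mat n n" and sym: "\<And>i j. i < n \<Longrightarrow> j < n \<Longrightarrow> W $$ (i,j) = W $$ (j,i)"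
  shows "tr (W * W) = (\<Sum>l\<in>{0..<n}. \<Sum>j\<in>{0..<n}. (W $$ (l,j))\<^sup>2)"
  unfolding tr_def using W sym
  by (intro sum.cong refl) (auto simp: scalar_prod_def row_def col_def power2_eq_square intro!: sum.cong)

lemma qf_step:
  fixes W :: "real mat"
  assumes W: "W \<in> carrier_mat n n" and sym: "\<And>i j. i < n \<Longrightarrow> j < n \<Longrightarrow> W $$ (i,j) = W $$ (j,i)"
  shows "(Qf n W x)\<^sup>2 \<le> (\<Sum>i\<in>{0..<n}. (x i)\<^sup>2) * Qf n (W * W) x"
    and "Qf n (W * W) x \<le> tr (W * W) * (\<Sum>i\<in>{0..<n}. (x i)\<^sup>2)"
proof -
  show "(Qf n W x)\<^sup>2 \<le> (\<Sum>i\<in>{0..<n}. (x i)\<^sup>2) * Qf n (W * W) x"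
  proof -
    have e1: "Qf n (W * W) x = (\<Sum>l\<in>{0..<n}. (\<Sum>j\<in>{0..<n}. W $$ (l,j) * x j)\<^sup>2)"
      by (rule qf_square[OF W sym])
    have e2: "Qf n W x = (\<Sum>l\<in>{0..<n}. x l * (\<Sum>j\<in>{0..<n}. W $$ (l,j) * x j))"
      by (rule qf_lin)
    show ?thesis unfolding e1 e2 by (rule cauchy_schwarz_sum)
  qed
  have "Qf n (W * W) x \<le> (\<Sum>l\<in>{0..<n}. (\<Sum>j\<in>{0..<n}. (W $$ (l,j))\<^sup>2) * (\<Sum>j\<in>{0..<n}. (x j)\<^sup>2))"
  proof -
    have e1: "Qf n (W * W) x = (\<Sum>l\<in>{0..<n}. (\<Sum>j\<in>{0..<n}. W $$ (l,j) * x j)\<^sup>2)"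
      by (rule qf_square[OF W sym])
    show ?thesis unfolding e1 by (intro sum_mono cauchy_schwarz_sum)
  qed
  also have "\<dots> = tr (W * W) * (\<Sum>i\<in>{0..<n}. (x i)\<^sup>2)"
  proof -
    have e3: "tr (W * W) = (\<Sum>l\<in>{0..<n}. \<Sum>j\<in>{0..<n}. (W $$ (l,j))\<^sup>2)"
      by (rule tr_square[OF W sym])
    show ?thesis unfolding e3 by (simp add: sum_distrib_right)
  qed
  finally show "Qf n (W * W) x \<le> tr (W * W) * (\<Sum>i\<in>{0..<n}. (x i)\<^sup>2)" .
qed


lemma pow_mat_one:
  fixes M :: "'a::comm_ring_1 mat"
  assumes M: "M \<in> carrier_mat n n" shows "M ^\<^sub>m 1 = M"
  using M by simp

lemma rayleigh_power:
  fixes M :: "real mat" and g :: "nat \<Rightarrow> real"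
  assumes M: "M \<in> carrier_mat n n" and sym: "\<And>i j. i < n \<Longrightarrow> j < n \<Longrightarrow> M $$ (i,j) = M $$ (j,i)"
    and trp: "\<And>N. tr (M ^\<^sub>m N) = (\<Sum>i\<in>{0..<L}. (g i) ^ N)"
    and Xpos: "(\<Sum>i\<in>{0..<n}. (x i)\<^sup>2) > 0"
  shows "\<exists>i<L. \<bar>g i\<bar> \<ge> \<bar>Qf n M x\<bar> / (\<Sum>i\<in>{0..<n}. (x i)\<^sup>2)"
proof -
  define X where "X = (\<Sum>i\<in>{0..<n}. (x i)\<^sup>2)"
  have X: "X > 0" using Xpos by (simp add: X_def)
  define q where "q = \<bar>Qf n M x\<bar> / X"
  define b where "b t = Qf n (M ^\<^sub>m (2 ^ t)) x / X" for t :: nat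
  have Wc: "\<And>t. M ^\<^sub>m (2 ^ t) \<in> carrier_mat n n" using M by simp
  have Ws: "\<And>t i j. i < n \<Longrightarrow> j < n \<Longrightarrow> (M ^\<^sub>m (2 ^ t)) $$ (i,j) = (M ^\<^sub>m (2 ^ t)) $$ (j,i)"
    using sym_pow[OF M sym] by blast
  have WW: "\<And>t. M ^\<^sub>m (2 ^ t) * M ^\<^sub>m (2 ^ t) = M ^\<^sub>m (2 ^ Suc t)"
    using pow_mat_add[OF M] by (metis mult_2 power_Suc)
  have step: "(b t)\<^sup>2 \<le> b (Suc t)" for t
  proof -
    have "(Qf n (M ^\<^sub>m (2 ^ t)) x)\<^sup>2 \<le> X * Qf n (M ^\<^sub>m (2 ^ Suc t)) x"
      using qf_step(1)[OF Wc Ws, of t x] WW unfolding X_def by simp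
    then have "(Qf n (M ^\<^sub>m (2 ^ t)) x)\<^sup>2 / X\<^sup>2 \<le> X * Qf n (M ^\<^sub>m (2 ^ Suc t)) x / X\<^sup>2"
      using X by (intro divide_right_mono) auto
    then show ?thesis using X unfolding b_def by (simp add: power2_eq_square power_divide)
  qed
  have trb: "b (Suc t) \<le> tr (M ^\<^sub>m (2 ^ Suc t))" for t
  proof -
    have "Qf n (M ^\<^sub>m (2 ^ Suc t)) x \<le> tr (M ^\<^sub>m (2 ^ Suc t)) * X"
      using qf_step(2)[OF Wc Ws, of t x] WW unfolding X_def by simp
    then show ?thesis using X unfolding b_def by (simp add: pos_divide_le_eq)
  qed
  have b0: "\<bar>b 0\<bar> = q" unfolding b_def q_def using M X by simp
  have ind: "q ^ (2 ^ Suc t) \<le> b (Suc t)" for t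
  proof (induction t)
    case 0
    have "q ^ (2 ^ Suc 0) = (b 0)\<^sup>2" using b0 by (metis power_one_right power2_abs power_Suc0_right)
    then show ?case using step[of 0] by simp
  next
    case (Suc t)
    have q0: "0 \<le> q ^ (2 ^ Suc t)" unfolding q_def using X by simp
    have "q ^ (2 ^ Suc (Suc t)) = (q ^ (2 ^ Suc t))\<^sup>2"
      by (simp add: power_mult[symmetric] mult.commute)
    also have "\<dots> \<le> (b (Suc t))\<^sup>2" using Suc q0 by (intro power_mono) auto
    also have "\<dots> \<le> b (Suc (Suc t))" by (rule step)
    finally show ?case .
  qed
  have key: "q ^ (2 ^ Suc t) \<le> (\<Sum>i\<in>{0..<L}. (g i) ^ (2 ^ Suc t))" for t
    using ind[of t] trb[of t] trp[of "2 ^ Suc t"] by simp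
  have nL: "L = n"
  proof -
    have "tr (M ^\<^sub>m 0) = real n" using M unfolding tr_def by simp
    then show ?thesis using trp[of 0] by simp
  qed
  have n0: "n > 0"
  proof (rule ccontr)
    assume "\<not> n > 0" then have "n = 0" by simp
    then show False using X unfolding X_def by simp
  qed
  show ?thesis
  proof (rule ccontr)
    assume "\<not> ?thesis"
    then have lt: "\<And>i. i < L \<Longrightarrow> \<bar>g i\<bar> < q" unfolding q_def X_def by auto
    have qpos: "q > 0" using lt[of 0] nL n0 by simp
    define r where "r = Max ((\<lambda>i. \<bar>g i\<bar> / q) ` {0..<L})"
    have fin: "finite ((\<lambda>i. \<bar>g i\<bar> / q) ` {0..<L})" by simp
    have ne: "(\<lambda>i. \<bar>g i\<bar> / q) ` {0..<L} \<noteq> {}" using nL n0 by simp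
    have r1: "r < 1"
    proof -
      have "\<forall>a\<in>(\<lambda>i. \<bar>g i\<bar> / q) ` {0..<L}. a < 1" using lt qpos by auto
      then show ?thesis unfolding r_def using Max_in[OF fin ne] by blast
    qed
    have rge: "\<And>i. i < L \<Longrightarrow> \<bar>g i\<bar> \<le> r * q"
    proof -
      fix i assume i: "i < L"
      have "\<bar>g i\<bar> / q \<le> r" unfolding r_def using fin i by (intro Max_ge) auto
      then show "\<bar>g i\<bar> \<le> r * q" using qpos by (simp add: divide_le_eq)
    qed
    have r0: "0 \<le> r"
    proof -
      have "\<bar>g 0\<bar> / q \<le> r" unfolding r_def using fin nL n0 by (intro Max_ge) auto
      moreover have "0 \<le> \<bar>g 0\<bar> / q" using qpos by simp
      ultimately show ?thesis by linarith
    qed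
    have bound: "1 \<le> real L * r ^ (2 ^ Suc t)" for t
    proof -
      have "q ^ (2 ^ Suc t) \<le> (\<Sum>i\<in>{0..<L}. (g i) ^ (2 ^ Suc t))" by (rule key)
      also have "\<dots> \<le> (\<Sum>i\<in>{0..<L}. (r * q) ^ (2 ^ Suc t))"
      proof (rule sum_mono)
        fix i assume "i \<in> {0..<L}"
        then have "\<bar>g i\<bar> \<le> r * q" using rge by simp
        then have "\<bar>g i\<bar> ^ (2 ^ Suc t) \<le> (r * q) ^ (2 ^ Suc t)" by (intro power_mono) auto
        moreover have "(g i) ^ (2 ^ Suc t) \<le> \<bar>g i\<bar> ^ (2 ^ Suc t)"
          by (metis abs_ge_self power_abs)
        ultimately show "(g i) ^ (2 ^ Suc t) \<le> (r * q) ^ (2 ^ Suc t)" by linarith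
      qed
      also have "\<dots> = real L * r ^ (2 ^ Suc t) * q ^ (2 ^ Suc t)" by (simp add: power_mult_distrib)
      finally have "q ^ (2 ^ Suc t) * 1 \<le> q ^ (2 ^ Suc t) * (real L * r ^ (2 ^ Suc t))"
        by (simp add: mult_ac)
      then show ?thesis using qpos by (simp add: mult_le_cancel_left_pos)
    qed
    have Lpos: "real L > 0" using nL n0 by simp
    obtain t where t: "r ^ t < 1 / real L" using real_arch_pow_inv[of "1 / real L" r] Lpos r1 by auto
    have "r ^ (2 ^ Suc t) \<le> r ^ t"
      by (rule power_decreasing) (use r0 r1 less_exp[of "Suc t"] in auto)
    then have "real L * r ^ (2 ^ Suc t) < real L * (1 / real L)"
      using t Lpos by (intro mult_strict_left_mono) auto
    then show False using bound[of t] Lpos by simp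
  qed
qed




lemma sum_list_singletons: "(\<Sum>e\<leftarrow>es. {#e#}) = mset es"
  by (induction es) auto

lemma proots_linear_prod: "proots (\<Prod>e\<leftarrow>es. [:- e, 1:]) = mset (es :: complex list)"
proof -
  have "0 \<notin> set (map (\<lambda>e. [:- e, 1:]) es)" by auto
  then have "proots (\<Prod>e\<leftarrow>es. [:- e, 1:]) = (\<Sum>p\<leftarrow>map (\<lambda>e. [:- e, 1:]) es. proots p)"
    using proots_prod_list[of "map (\<lambda>e. [:- e, 1:]) es"] by (simp add: o_def)
  also have "\<dots> = (\<Sum>e\<leftarrow>es. {#e#})"
    by (simp add: o_def)
  finally show ?thesis by (simp add: sum_list_singletons)
qed

lemma tr_map_real: assumes X: "X \<in> carrier_mat n n"
  shows "tr (map_mat complex_of_real X) = complex_of_real (tr X)"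
  unfolding tr_def using X by (simp add: of_real_sum)

lemma real_sym_spectrum:
  fixes A :: "real mat"
  assumes A: "A \<in> carrier_mat n n" and sym: "\<And>i j. i < n \<Longrightarrow> j < n \<Longrightarrow> A $$ (i,j) = A $$ (j,i)"
  obtains es where "length es = n" "proots (char_poly (map_mat complex_of_real A)) = mset es"
    "\<And>e. e \<in> set es \<Longrightarrow> Im e = 0"
    "\<And>c N. tr ((A + c \<cdot>\<^sub>m 1\<^sub>m n) ^\<^sub>m N) = (\<Sum>i\<in>{0..<n}. (Re (es ! i) + c) ^ N)"
proof -
  let ?A = "map_mat complex_of_real A"
  have Ac: "?A \<in> carrier_mat n n" using A by simp
  obtain es where cp: "char_poly ?A = (\<Prod>e\<leftarrow>es. [:- e, 1:])" and len: "length es = n"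
    using char_poly_factorized[OF Ac] by auto
  have real: "Im e = 0" if e: "e \<in> set es" for e
  proof (rule real_sym_eig_real[OF A sym])
    show "poly (char_poly ?A) e = 0" unfolding cp using e
      by (simp add: poly_prod_list prod_list_zero_iff)
  qed
  have trs: "tr ((A + c \<cdot>\<^sub>m 1\<^sub>m n) ^\<^sub>m N) = (\<Sum>i\<in>{0..<n}. (Re (es ! i) + c) ^ N)" for c N
  proof -
    have M: "A + c \<cdot>\<^sub>m 1\<^sub>m n \<in> carrier_mat n n" using A by simp
    have hm: "map_mat complex_of_real (A + c \<cdot>\<^sub>m 1\<^sub>m n) = ?A + complex_of_real c \<cdot>\<^sub>m 1\<^sub>m n"
      using A by (intro eq_matI) auto
    have "complex_of_real (tr ((A + c \<cdot>\<^sub>m 1\<^sub>m n) ^\<^sub>m N))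
        = tr (map_mat complex_of_real ((A + c \<cdot>\<^sub>m 1\<^sub>m n) ^\<^sub>m N))"
      by (rule tr_map_real[symmetric, of _ n]) (use M in simp)
    also have "\<dots> = tr ((?A + complex_of_real c \<cdot>\<^sub>m 1\<^sub>m n) ^\<^sub>m N)"
      unfolding of_real_hom.mat_hom_pow[OF M, of N] hm by (rule refl)
    also have "\<dots> = (\<Sum>e\<leftarrow>es. (e + complex_of_real c) ^ N)"
      by (rule tr_pow_eigen[OF Ac cp])
    also have "\<dots> = (\<Sum>i\<in>{0..<n}. (es ! i + complex_of_real c) ^ N)"
      using len by (simp add: sum_list_sum_nth)
    also have "\<dots> = (\<Sum>i\<in>{0..<n}. complex_of_real ((Re (es ! i) + c) ^ N))"
    proof (intro sum.cong refl)
      fix i assume "i \<in> {0..<n}"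
      then have "es ! i \<in> set es" using len by simp
      then have "es ! i = complex_of_real (Re (es ! i))" using real by (simp add: complex_eq_iff)
      then show "(es ! i + complex_of_real c) ^ N = complex_of_real ((Re (es ! i) + c) ^ N)"
        by (metis of_real_add of_real_power)
    qed
    also have "\<dots> = complex_of_real (\<Sum>i\<in>{0..<n}. (Re (es ! i) + c) ^ N)" by simp
    finally show ?thesis by (simp only: of_real_eq_iff)
  qed
  show ?thesis
    by (rule that[OF len _ real trs]) (simp add: cp proots_linear_prod)
qed



lemma exp_strict: fixes x :: real assumes "x \<noteq> 0" shows "1 + x < exp x"
proof (cases "1 + x / 2 \<ge> 0")
  case True
  have "(1 + x / 2)\<^sup>2 \<le> (exp (x / 2))\<^sup>2"
    using True exp_ge_add_one_self[of "x/2"] by (intro power_mono) auto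
  also have "(exp (x / 2))\<^sup>2 = exp x" by (simp add: power2_eq_square flip: exp_add)
  finally have "1 + x + x\<^sup>2 / 4 \<le> exp x" by (simp add: power2_eq_square field_simps)
  moreover have "x\<^sup>2 > 0" using assms by simp
  ultimately show ?thesis by linarith
next
  case False
  then have "1 + x < 0" by linarith
  then show ?thesis using exp_gt_zero[of x] by linarith
qed

lemma exp_minus_ge2: fixes x :: real assumes "x \<ge> 2"
  shows "exp 2 - 2 \<le> exp x - x" and "x \<noteq> 2 \<Longrightarrow> exp 2 - 2 < exp x - x"
proof -
  have e: "exp x = exp 2 * exp (x - 2)" by (simp flip: exp_add)
  have e1: "exp (2::real) > 1" by simp
  have "exp 2 * (1 + (x - 2)) \<le> exp x" unfolding e
    by (intro mult_left_mono) (use exp_ge_add_one_self[of "x - 2"] in auto)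
  moreover have "exp 2 * (1 + (x - 2)) = exp 2 + exp 2 * (x - 2)" by (simp add: algebra_simps)
  moreover have "exp 2 * (x - 2) \<ge> x - 2" using mult_right_mono[of 1 "exp 2" "x - 2"] e1 assms by simp
  ultimately show "exp 2 - 2 \<le> exp x - x"
    using assms by (smt (verit) mult_le_cancel_right1)
  assume "x \<noteq> 2"
  then have "x > 2" using assms by simp
  then have "exp 2 * (x - 2) > x - 2" using e1 by simp
  with \<open>exp 2 * (1 + (x - 2)) \<le> exp x\<close> show "exp 2 - 2 < exp x - x" by (simp add: algebra_simps)
qed

lemma exp_minus_lem2: fixes y :: real assumes "y \<le> -2"
  shows "exp (-2) + 2 \<le> exp y - y" and "y \<noteq> -2 \<Longrightarrow> exp (-2) + 2 < exp y - y"
proof -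
  have e: "exp y = exp (-2) * exp (y + 2)" by (simp flip: exp_add)
  have e1: "exp (-2::real) < 1" by simp
  have low: "exp (-2) * (1 + (y + 2)) \<le> exp y" unfolding e
    by (intro mult_left_mono) (use exp_ge_add_one_self[of "y + 2"] in auto)
  have "(exp (-2) - 1) * (y + 2) \<ge> 0" using e1 assms by (intro mult_nonpos_nonpos) auto
  then show "exp (-2) + 2 \<le> exp y - y" using low by (simp add: algebra_simps)
  assume "y \<noteq> -2"
  then have "y < -2" using assms by simp
  then have "(exp (-2) - 1) * (y + 2) > 0" using e1 by (intro mult_neg_neg) auto
  then show "exp (-2) + 2 < exp y - y" using low by (simp add: algebra_simps)
qed

lemma cosh2: "2 * cosh (2::real) = exp 2 + exp (-2)"
  by (simp add: cosh_def)

lemma ee_bound: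
  fixes l :: "nat \<Rightarrow> real"
  assumes a: "a < n" and b: "b < n" and la: "l a \<ge> 2" and lb: "l b \<le> -2"
    and s0: "(\<Sum>i\<in>{0..<n}. l i) = 0"
  shows "(\<Sum>i\<in>{0..<n}. exp (l i)) \<ge> 2 * cosh 2 + (real n - 2)"
    and "(\<Sum>i\<in>{0..<n}. exp (l i)) = 2 * cosh 2 + (real n - 2) \<longleftrightarrow>
          (l a = 2 \<and> l b = -2 \<and> (\<forall>i\<in>{0..<n} - {a, b}. l i = 0))"
proof -
  have ab: "a \<noteq> b" using la lb by auto
  let ?R = "{0..<n} - {a, b}"
  have fin: "finite ?R" by simp
  have cR: "card ?R = n - 2" using a b ab by (simp add: card_Diff_subset)
  have split: "(\<Sum>i\<in>{0..<n}. f i) = f a + f b + (\<Sum>i\<in>?R. f i)" for f :: "nat \<Rightarrow> real"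
  proof -
    have "(\<Sum>i\<in>{0..<n}. f i) = f a + (\<Sum>i\<in>{0..<n} - {a}. f i)"
      using a by (intro sum.remove) auto
    also have "(\<Sum>i\<in>{0..<n} - {a}. f i) = f b + (\<Sum>i\<in>{0..<n} - {a} - {b}. f i)"
      using b ab by (intro sum.remove) auto
    also have "{0..<n} - {a} - {b} = ?R" by auto
    finally show ?thesis by simp
  qed
  have sR: "(\<Sum>i\<in>?R. l i) = - l a - l b" using s0 split[of l] by simp
  have eR: "(\<Sum>i\<in>?R. exp (l i)) \<ge> (\<Sum>i\<in>?R. 1 + l i)"
    by (intro sum_mono) simp
  have sR1: "(\<Sum>i\<in>?R. 1 + l i) = real n - 2 - l a - l b"
    using cR sR a b ab by (simp add: sum.distrib)
  have A1: "exp 2 - 2 \<le> exp (l a) - l a" by (rule exp_minus_ge2(1)[OF la])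
  have B1: "exp (-2) + 2 \<le> exp (l b) - l b" by (rule exp_minus_lem2(1)[OF lb])
  have tot: "(\<Sum>i\<in>{0..<n}. exp (l i)) = exp (l a) + exp (l b) + (\<Sum>i\<in>?R. exp (l i))"
    by (rule split)
  show "(\<Sum>i\<in>{0..<n}. exp (l i)) \<ge> 2 * cosh 2 + (real n - 2)"
    unfolding tot cosh2 using eR sR1 A1 B1 by linarith
  show "(\<Sum>i\<in>{0..<n}. exp (l i)) = 2 * cosh 2 + (real n - 2) \<longleftrightarrow>
          (l a = 2 \<and> l b = -2 \<and> (\<forall>i\<in>?R. l i = 0))"
  proof
    assume eq: "(\<Sum>i\<in>{0..<n}. exp (l i)) = 2 * cosh 2 + (real n - 2)"
    have ea: "l a = 2"
    proof (rule ccontr)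
      assume "l a \<noteq> 2"
      then have "exp 2 - 2 < exp (l a) - l a" by (rule exp_minus_ge2(2)[OF la])
      then show False using eq unfolding tot cosh2 using eR sR1 B1 by linarith
    qed
    have eb: "l b = -2"
    proof (rule ccontr)
      assume "l b \<noteq> -2"
      then have "exp (-2) + 2 < exp (l b) - l b" by (rule exp_minus_lem2(2)[OF lb])
      then show False using eq unfolding tot cosh2 using eR sR1 A1 by linarith
    qed
    have er: "\<forall>i\<in>?R. l i = 0"
    proof (rule ccontr)
      assume "\<not> ?thesis"
      then obtain j where j: "j \<in> ?R" "l j \<noteq> 0" by blast
      have "(\<Sum>i\<in>?R. exp (l i)) > (\<Sum>i\<in>?R. 1 + l i)"
        using j exp_strict[of "l j"] by (intro sum_strict_mono_ex1[OF fin]) auto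
      then show False using eq unfolding tot cosh2 using sR1 A1 B1 by linarith
    qed
    show "l a = 2 \<and> l b = -2 \<and> (\<forall>i\<in>?R. l i = 0)" using ea eb er by simp
  next
    assume h: "l a = 2 \<and> l b = -2 \<and> (\<forall>i\<in>?R. l i = 0)"
    then have "(\<Sum>i\<in>?R. exp (l i)) = real n - 2" using cR a b ab by (simp add: of_nat_diff)
    then show "(\<Sum>i\<in>{0..<n}. exp (l i)) = 2 * cosh 2 + (real n - 2)"
      unfolding tot cosh2 using h by simp
  qed
qed

lemma sq_char:
  fixes l :: "nat \<Rightarrow> real"
  assumes a: "a < n" and b: "b < n" and la: "l a \<ge> 2" and lb: "l b \<le> -2"
  shows "(\<Sum>i\<in>{0..<n}. (l i)\<^sup>2) \<ge> 8"
    and "(\<Sum>i\<in>{0..<n}. (l i)\<^sup>2) = 8 \<longleftrightarrow> (l a = 2 \<and> l b = -2 \<and> (\<forall>i\<in>{0..<n} - {a, b}. l i = 0))"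
proof -
  have ab: "a \<noteq> b" using la lb by auto
  let ?R = "{0..<n} - {a, b}"
  have fin: "finite ?R" by simp
  have split: "(\<Sum>i\<in>{0..<n}. f i) = f a + f b + (\<Sum>i\<in>?R. f i)" for f :: "nat \<Rightarrow> real"
  proof -
    have "(\<Sum>i\<in>{0..<n}. f i) = f a + (\<Sum>i\<in>{0..<n} - {a}. f i)"
      using a by (intro sum.remove) auto
    also have "(\<Sum>i\<in>{0..<n} - {a}. f i) = f b + (\<Sum>i\<in>{0..<n} - {a} - {b}. f i)"
      using b ab by (intro sum.remove) auto
    also have "{0..<n} - {a} - {b} = ?R" by auto
    finally show ?thesis by simp
  qed
  have A: "(l a)\<^sup>2 \<ge> 4"
  proof -
    have "2\<^sup>2 \<le> (l a)\<^sup>2" using la by (intro power_mono) auto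
    then show ?thesis by simp
  qed
  have B: "(l b)\<^sup>2 \<ge> 4"
  proof -
    have "2 \<le> - l b" using lb by simp
    then have "2\<^sup>2 \<le> (- l b)\<^sup>2" by (intro power_mono) auto
    then show ?thesis by simp
  qed
  have R: "(\<Sum>i\<in>?R. (l i)\<^sup>2) \<ge> 0" by (intro sum_nonneg) simp
  show "(\<Sum>i\<in>{0..<n}. (l i)\<^sup>2) \<ge> 8" unfolding split[of "\<lambda>i. (l i)\<^sup>2"] using A B R by linarith
  show "(\<Sum>i\<in>{0..<n}. (l i)\<^sup>2) = 8 \<longleftrightarrow> (l a = 2 \<and> l b = -2 \<and> (\<forall>i\<in>?R. l i = 0))"
  proof
    assume eq: "(\<Sum>i\<in>{0..<n}. (l i)\<^sup>2) = 8"
    then have e: "(l a)\<^sup>2 + (l b)\<^sup>2 + (\<Sum>i\<in>?R. (l i)\<^sup>2) = 8" using split[of "\<lambda>i. (l i)\<^sup>2"] by simp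
    have "(l a)\<^sup>2 = 4" using e A B R by linarith
    then have "(l a - 2) * (l a + 2) = 0" by (simp add: algebra_simps power2_eq_square)
    then have ea: "l a = 2" using la by auto
    have "(l b)\<^sup>2 = 4" using e A B R by linarith
    then have "(l b - 2) * (l b + 2) = 0" by (simp add: algebra_simps power2_eq_square)
    then have eb: "l b = -2" using lb by auto
    have "(\<Sum>i\<in>?R. (l i)\<^sup>2) = 0" using e A B R by linarith
    then have "\<forall>i\<in>?R. (l i)\<^sup>2 = 0" using sum_nonneg_eq_0_iff[OF fin, of "\<lambda>i. (l i)\<^sup>2"] by simp
    then show "l a = 2 \<and> l b = -2 \<and> (\<forall>i\<in>?R. l i = 0)" using ea eb by simp
  next
    assume h: "l a = 2 \<and> l b = -2 \<and> (\<forall>i\<in>?R. l i = 0)"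
    then show "(\<Sum>i\<in>{0..<n}. (l i)\<^sup>2) = 8" unfolding split[of "\<lambda>i. (l i)\<^sup>2"] by simp
  qed
qed



definition Pset :: "nat \<Rightarrow> (nat \<Rightarrow> nat \<Rightarrow> bool) \<Rightarrow> (nat \<times> nat) set" where
  "Pset n E = {p \<in> {0..<n} \<times> {0..<n}. E (fst p) (snd p)}"

lemma mod_two_step:
  fixes i L :: nat assumes "i < L" "3 \<le> L"
  shows "((i + 1) mod L + 1) mod L \<noteq> i"
proof (cases "i + 1 < L")
  case True
  then have "(i + 1) mod L = i + 1" by simp
  moreover have "(i + 2) mod L \<noteq> i"
  proof (cases "i + 2 < L")
    case True then show ?thesis by simp
  next
    case False
    then have "i + 2 = L" using \<open>i + 1 < L\<close> by simp
    then show ?thesis using assms by simp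
  qed
  ultimately show ?thesis by (simp add: add.assoc)
next
  case False
  then have "i + 1 = L" using assms by simp
  then show ?thesis using assms by simp
qed

lemma unicyclic_card:
  assumes sg: "simple_graph n E" and uc: "unicyclic n E"
  shows "2 * n \<le> card (Pset n E)"
proof -
  have conn: "graph_connected n E" using uc unfolding unicyclic_def by simp
  have "graph_cycles n E \<noteq> {}" using uc unfolding unicyclic_def by auto
  then obtain vs where cyc: "is_cycle n E vs" unfolding graph_cycles_def by auto
  define L where "L = length vs"
  have L3: "3 \<le> L" and dist: "distinct vs" and sub: "set vs \<subseteq> {0..<n}"
    and cE: "\<And>i. i < L \<Longrightarrow> E (vs ! i) (vs ! ((i + 1) mod L))"
    using cyc unfolding is_cycle_def L_def by auto
  define C where "C = set vs"
  have vsne: "vs \<noteq> []" using L3 unfolding L_def by (cases vs) auto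
  have C0: "vs ! 0 \<in> C" unfolding C_def using vsne by (intro nth_mem) simp
  define idx where "idx v = (SOME i. i < L \<and> vs ! i = v)" for v
  have idx: "idx v < L \<and> vs ! idx v = v" if "v \<in> C" for v
  proof -
    have "\<exists>i. i < L \<and> vs ! i = v" using that unfolding C_def L_def by (auto simp: in_set_conv_nth)
    then show ?thesis unfolding idx_def by (rule someI_ex)
  qed
  have idx_nth: "idx (vs ! i) = i" if "i < L" for i
  proof -
    have "vs ! i \<in> C" using that unfolding C_def L_def by simp
    then have "idx (vs ! i) < L" "vs ! idx (vs ! i) = vs ! i" using idx by auto
    then show ?thesis using dist that nth_eq_iff_index_eq unfolding L_def by metis
  qed
  define d where "d v = (LEAST k. \<exists>c\<in>C. (E ^^ k) v c)" for v
  have reach: "\<exists>k. \<exists>c\<in>C. (E ^^ k) v c" if "v < n" for v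
  proof -
    have "vs ! 0 < n" using C0 sub unfolding C_def by auto
    then have "E\<^sup>*\<^sup>* v (vs ! 0)" using conn that unfolding graph_connected_def by auto
    then obtain k where "(E ^^ k) v (vs ! 0)" by (auto simp: rtranclp_power)
    then show ?thesis using C0 by auto
  qed
  have dprop: "\<exists>c\<in>C. (E ^^ d v) v c" if "v < n" for v
    unfolding d_def using reach[OF that] by (rule LeastI_ex)
  have dle: "d v \<le> k" if "c \<in> C" "(E ^^ k) v c" for v k c
    unfolding d_def using that by (intro Least_le) auto
  have down: "\<exists>w. E v w \<and> d w < d v" if v: "v < n" "v \<notin> C" for v
  proof -
    obtain c where c: "c \<in> C" "(E ^^ d v) v c" using dprop[OF v(1)] by auto
    have "d v \<noteq> 0" using c v by (cases "d v") auto
    then obtain k where k: "d v = Suc k" by (cases "d v") auto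
    then obtain w where w: "E v w" "(E ^^ k) w c" using c(2) by (metis relpowp_Suc_D2)
    have "d w \<le> k" by (rule dle[OF c(1) w(2)])
    then show ?thesis using w k by auto
  qed
  define nxt where "nxt v = (if v \<in> C then vs ! ((idx v + 1) mod L) else (SOME w. E v w \<and> d w < d v))" for v
  have nxtC: "nxt v = vs ! ((idx v + 1) mod L)" "nxt v \<in> C" "E v (nxt v)" if "v \<in> C" for v
  proof -
    show "nxt v = vs ! ((idx v + 1) mod L)" using that unfolding nxt_def by simp
    moreover have "(idx v + 1) mod L < L" using L3 by simp
    ultimately show "nxt v \<in> C" unfolding C_def L_def by simp
    show "E v (nxt v)" using cE[of "idx v"] idx[OF that] \<open>nxt v = vs ! ((idx v + 1) mod L)\<close> by simp
  qed
  have nxtN: "E v (nxt v) \<and> d (nxt v) < d v" if "v < n" "v \<notin> C" for v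
  proof -
    have "nxt v = (SOME w. E v w \<and> d w < d v)" using that unfolding nxt_def by simp
    then show ?thesis using someI_ex[OF down[OF that]] by simp
  qed
  have nxtE: "E v (nxt v)" if "v < n" for v
    using nxtC nxtN that by blast
  have no2: "\<not> (v = nxt w \<and> w = nxt v)" if v: "v < n" and w: "w < n" for v w
  proof
    assume h: "v = nxt w \<and> w = nxt v"
    have hv: "v = nxt w" using h by (rule conjunct1)
    have hw: "w = nxt v" using h by (rule conjunct2)
    show False
    proof (cases "v \<in> C")
      case False
      note dv = nxtN[OF v False]
      show False
      proof (cases "w \<in> C")
        case True
        then have "nxt w \<in> C" by (rule nxtC(2))
        then show False using hv False by blast
      next
        case False
        note dw = nxtN[OF w False]
        have h1: "nxt w = v" using hv by (rule sym)
        have h2: "nxt v = w" using hw by (rule sym)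
        have "d w < d v" using dv h2 by simp
        moreover have "d v < d w" using dw h1 by simp
        ultimately show False by simp
      qed
    next
      case True
      then have wC: "w \<in> C" using hw nxtC(2)[OF True] by simp
      define i where "i = idx v"
      have i: "i < L" "vs ! i = v" using idx[OF True] unfolding i_def by auto
      have j: "w = vs ! ((i + 1) mod L)" using hw nxtC(1)[OF True] unfolding i_def by simp
      have jL: "(i + 1) mod L < L" using L3 by simp
      have "idx w = (i + 1) mod L" using j idx_nth[OF jL] by simp
      then have "v = vs ! (((i + 1) mod L + 1) mod L)" using hv nxtC(1)[OF wC] by simp
      moreover have "((i + 1) mod L + 1) mod L < L" using L3 by simp
      ultimately have "((i + 1) mod L + 1) mod L = i"
        using i dist nth_eq_iff_index_eq unfolding L_def by metis
      then show False using mod_two_step[OF i(1) L3] by simp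
    qed
  qed
  define F where "F q = (if snd q = (0::nat) then (fst q, nxt (fst q)) else (nxt (fst q), fst q))" for q
  have nxt_lt: "nxt v < n" if "v < n" for v
    using sg nxtE[OF that] unfolding simple_graph_def by blast
  have inj: "inj_on F ({0..<n} \<times> {0::nat, 1})"
  proof (rule inj_onI)
    fix p q assume p: "p \<in> {0..<n} \<times> {0::nat, 1}" and q: "q \<in> {0..<n} \<times> {0::nat, 1}" and e: "F p = F q"
    obtain v a where pv: "p = (v, a)" by (cases p)
    obtain w b where qw: "q = (w, b)" by (cases q)
    have v: "v < n" and w: "w < n" and a: "a = 0 \<or> a = 1" and b: "b = 0 \<or> b = 1"
      using p q pv qw by auto
    show "p = q"
      using e a b no2[OF v w] no2[OF w v] unfolding pv qw F_def by auto
  qed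
  have img: "F ` ({0..<n} \<times> {0::nat, 1}) \<subseteq> Pset n E"
  proof
    fix y assume "y \<in> F ` ({0..<n} \<times> {0::nat, 1})"
    then obtain q where q: "q \<in> {0..<n} \<times> {0::nat, 1}" "y = F q" by blast
    obtain v a where qv: "q = (v, a)" by (cases q)
    have v: "v < n" and a: "a = 0 \<or> a = 1" and y: "y = F (v, a)" using q qv by auto
    have "E v (nxt v)" "E (nxt v) v" using nxtE[OF v] sg unfolding simple_graph_def by auto
    then show "y \<in> Pset n E" using a v nxt_lt[OF v] unfolding y F_def Pset_def by auto
  qed
  have fin: "finite (Pset n E)" unfolding Pset_def by simp
  have "card ({0..<n} \<times> {0::nat, 1}) \<le> card (Pset n E)"
    by (rule card_inj_on_le[OF inj img fin])
  then show ?thesis by (simp add: mult.commute)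
qed


lemma card_Pset_sum:
  "real (card (Pset n E)) = (\<Sum>i\<in>{0..<n}. \<Sum>j\<in>{0..<n}. if E i j then 1 else 0)"
proof -
  have "card (Pset n E) = (\<Sum>p\<in>Pset n E. 1::nat)" by simp
  then have "real (card (Pset n E)) = (\<Sum>p\<in>Pset n E. 1::real)" by simp
  also have "\<dots> = (\<Sum>p\<in>{0..<n} \<times> {0..<n}. if E (fst p) (snd p) then 1 else 0)"
    unfolding Pset_def by (rule sum.inter_filter) simp
  also have "\<dots> = (\<Sum>i\<in>{0..<n}. \<Sum>j\<in>{0..<n}. if E i j then 1 else 0)"
    by (simp add: sum.cartesian_product')
  finally show ?thesis .
qed

lemma adj_props:
  assumes sg: "simple_graph n E"
  shows "adj_matrix n E \<in> carrier_mat n n"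
    and "\<And>i j. i < n \<Longrightarrow> j < n \<Longrightarrow> adj_matrix n E $$ (i,j) = (if E i j then 1 else 0)"
    and "\<And>i j. i < n \<Longrightarrow> j < n \<Longrightarrow> adj_matrix n E $$ (i,j) = adj_matrix n E $$ (j,i)"
    and "\<And>i. \<not> E i i"
proof -
  show "adj_matrix n E \<in> carrier_mat n n" unfolding adj_matrix_def by simp
  show e: "\<And>i j. i < n \<Longrightarrow> j < n \<Longrightarrow> adj_matrix n E $$ (i,j) = (if E i j then 1 else 0)"
    unfolding adj_matrix_def by simp
  have "E i j = E j i" for i j using sg unfolding simple_graph_def by blast
  then show "\<And>i j. i < n \<Longrightarrow> j < n \<Longrightarrow> adj_matrix n E $$ (i,j) = adj_matrix n E $$ (j,i)"
    using e by simp
  show "\<And>i. \<not> E i i" using sg unfolding simple_graph_def by blast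
qed

lemma qf_shift:
  fixes M :: "real mat"
  assumes M: "M \<in> carrier_mat n n"
  shows "Qf n (M + c \<cdot>\<^sub>m 1\<^sub>m n) x = Qf n M x + c * (\<Sum>i\<in>{0..<n}. (x i)\<^sup>2)"
proof -
  have "Qf n (M + c \<cdot>\<^sub>m 1\<^sub>m n) x = (\<Sum>i\<in>{0..<n}. \<Sum>j\<in>{0..<n}. x i * M $$ (i,j) * x j + (if i = j then c * (x i)\<^sup>2 else 0))"
    unfolding Qf_def using M by (intro sum.cong refl) (auto simp: algebra_simps power2_eq_square)
  also have "\<dots> = Qf n M x + c * (\<Sum>i\<in>{0..<n}. (x i)\<^sup>2)"
    unfolding Qf_def by (simp add: sum.distrib sum_distrib_left)
  finally show ?thesis .
qed

lemma qf_adj: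
  assumes sg: "simple_graph n E"
  shows "Qf n (adj_matrix n E) (\<lambda>_. 1) = real (card (Pset n E))"
proof -
  note p = adj_props[OF sg]
  show ?thesis unfolding Qf_def card_Pset_sum using p(2) by (intro sum.cong refl) auto
qed

lemma qf_adj_sign:
  assumes sg: "simple_graph n E" and f: "\<forall>i<n. \<forall>j<n. E i j \<longrightarrow> f i \<noteq> f j"
  shows "Qf n (adj_matrix n E) (\<lambda>i. if f i then 1 else -1) = - real (card (Pset n E))"
proof -
  note p = adj_props[OF sg]
  have "Qf n (adj_matrix n E) (\<lambda>i. if f i then 1 else -1) =
      (\<Sum>i\<in>{0..<n}. \<Sum>j\<in>{0..<n}. - (if E i j then 1 else 0))"
    unfolding Qf_def using p(2) f by (intro sum.cong refl) auto
  also have "\<dots> = - real (card (Pset n E))" unfolding card_Pset_sum by (simp add: sum_negf)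
  finally show ?thesis .
qed

lemma tr_adj:
  assumes sg: "simple_graph n E"
  shows "tr (adj_matrix n E) = 0"
    and "tr (adj_matrix n E * adj_matrix n E) = real (card (Pset n E))"
proof -
  note p = adj_props[OF sg]
  show "tr (adj_matrix n E) = 0" unfolding tr_def using p(1,2,4) by simp
  have "tr (adj_matrix n E * adj_matrix n E) = (\<Sum>l\<in>{0..<n}. \<Sum>j\<in>{0..<n}. (adj_matrix n E $$ (l,j))\<^sup>2)"
    by (rule tr_square[OF p(1) p(3)])
  also have "\<dots> = real (card (Pset n E))" unfolding card_Pset_sum
    using p(2) by (intro sum.cong refl) auto
  finally show "tr (adj_matrix n E * adj_matrix n E) = real (card (Pset n E))" .
qed


lemma all_less4: "(\<forall>i<(4::nat). P i) \<longleftrightarrow> P 0 \<and> P 1 \<and> P 2 \<and> P 3"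
proof
  assume "P 0 \<and> P 1 \<and> P 2 \<and> P 3"
  then show "\<forall>i<4. P i" by (auto simp: less_Suc_eq numeral_eq_Suc)
qed auto

lemma sum4: "(\<Sum>i\<in>{0..<(4::nat)}. g i) = g 0 + g 1 + g 2 + (g 3 :: real)"
  by (simp add: numeral_eq_Suc)

lemma cases6:
  fixes a b c d e g :: bool and f0 f1 f2 f3 :: bool
  assumes cnt: "(if a then 1 else 0) + (if b then 1 else 0) + (if c then 1 else 0) +
      (if d then 1 else 0) + (if e then 1 else 0) + (if g then 1 else (0::real)) = 4"
   and "a \<longrightarrow> f0 \<noteq> f1" "b \<longrightarrow> f0 \<noteq> f2" "c \<longrightarrow> f0 \<noteq> f3"
     "d \<longrightarrow> f1 \<noteq> f2" "e \<longrightarrow> f1 \<noteq> f3" "g \<longrightarrow> f2 \<noteq> f3"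
  shows "(a \<and> d \<and> g \<and> c \<and> \<not> b \<and> \<not> e) \<or> (b \<and> d \<and> e \<and> c \<and> \<not> a \<and> \<not> g) \<or> (a \<and> b \<and> e \<and> g \<and> \<not> c \<and> \<not> d)"
  using assms
  by (cases a; cases b; cases c; cases d; cases e; cases g; auto)

lemma small_card:
  assumes sg: "simple_graph n E" and n: "n \<le> 3"
  shows "card (Pset n E) \<le> 6"
proof -
  have "Pset n E \<subseteq> {(0,1),(1,0),(0,2),(2,0),(1,2),(2,1)}"
  proof
    fix p assume "p \<in> Pset n E"
    then obtain i j where p: "p = (i,j)" "i < n" "j < n" "E i j" unfolding Pset_def by auto
    have "i \<noteq> j" using sg p(4) unfolding simple_graph_def by blast
    moreover have "i < 3" "j < 3" using p n by auto
    ultimately show "p \<in> {(0,1),(1,0),(0,2),(2,0),(1,2),(2,1)}" using p(1)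
      by (auto simp: less_Suc_eq numeral_eq_Suc)
  qed
  then have "card (Pset n E) \<le> card {(0::nat,1::nat),(1,0),(0,2),(2,0),(1,2),(2,1)}"
    by (intro card_mono) auto
  also have "\<dots> = 6" by simp
  finally show ?thesis .
qed

lemma swap_bij:
  fixes a b :: nat
  assumes "a < 4" "b < 4"
  shows "bij_betw (\<lambda>i. if i = a then b else if i = b then a else i) {0..<4} {0..<4}"
  by (rule bij_betwI[where g = "\<lambda>i. if i = a then b else if i = b then a else i"]) (use assms in auto)

lemma iso_card:
  assumes iso: "isomorphic_C4 n E"
  shows "n = 4" and "card (Pset n E) = 8"
proof -
  show n: "n = 4" using iso unfolding isomorphic_C4_def by simp
  obtain p where bij: "bij_betw p {0..<4} {0..<4}" and e: "\<forall>i<4. \<forall>j<4. E i j \<longleftrightarrow> C4 (p i) (p j)"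
    using iso unfolding isomorphic_C4_def by auto
  have "real (card (Pset n E)) = (\<Sum>i\<in>{0..<4}. \<Sum>j\<in>{0..<4}. if C4 (p i) (p j) then 1 else 0)"
    unfolding card_Pset_sum n using e by (intro sum.cong refl) auto
  also have "\<dots> = (\<Sum>i\<in>{0..<4}. \<Sum>j\<in>{0..<4}. if C4 (p i) j then 1 else 0)"
    by (intro sum.cong refl sum.reindex_bij_betw[OF bij])
  also have "\<dots> = (\<Sum>i\<in>{0..<4}. \<Sum>j\<in>{0..<4}. if C4 i j then 1 else 0)"
    by (rule sum.reindex_bij_betw[OF bij, where g = "\<lambda>i. \<Sum>j\<in>{0..<4}. if C4 i j then 1 else 0"])
  also have "\<dots> = 8" unfolding sum4 by (simp add: C4_def)
  finally show "card (Pset n E) = 8" by simp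
qed

lemma c4_char:
  assumes sg: "simple_graph 4 E" and bp: "bipartite 4 E" and c: "card (Pset 4 E) = 8"
  shows "isomorphic_C4 4 E"
proof -
  have sy: "E i j = E j i" for i j using sg unfolding simple_graph_def by blast
  have ir: "\<not> E i i" for i using sg unfolding simple_graph_def by blast
  have "\<exists>f::nat\<Rightarrow>bool. \<forall>i<4. \<forall>j<4. E i j \<longrightarrow> f i \<noteq> f j" using bp unfolding bipartite_def .
  then obtain f :: "nat \<Rightarrow> bool" where f: "\<forall>i<4. \<forall>j<4. E i j \<longrightarrow> f i \<noteq> f j" ..
  have s: "E 1 0 = E 0 1" "E 2 0 = E 0 2" "E 3 0 = E 0 3" "E 2 1 = E 1 2" "E 3 1 = E 1 3" "E 3 2 = E 2 3"
    by (rule sy)+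
  have d: "\<not> E 0 0" "\<not> E 1 1" "\<not> E 2 2" "\<not> E 3 3" by (rule ir)+
  have fi: "\<And>i j. i < 4 \<Longrightarrow> j < 4 \<Longrightarrow> E i j \<Longrightarrow> f i \<noteq> f j" using f by blast
  have f6: "E 0 1 \<longrightarrow> f 0 \<noteq> f 1" "E 0 2 \<longrightarrow> f 0 \<noteq> f 2" "E 0 3 \<longrightarrow> f 0 \<noteq> f 3"
     "E 1 2 \<longrightarrow> f 1 \<noteq> f 2" "E 1 3 \<longrightarrow> f 1 \<noteq> f 3" "E 2 3 \<longrightarrow> f 2 \<noteq> f 3"
    by (intro impI fi; simp)+
  have cnt: "(if E 0 1 then 1 else 0) + (if E 0 2 then 1 else 0) + (if E 0 3 then 1 else 0) +
      (if E 1 2 then 1 else 0) + (if E 1 3 then 1 else 0) + (if E 2 3 then 1 else (0::real)) = 4"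
  proof -
    have "real (card (Pset 4 E)) = 8" using c by simp
    then have h16: "(\<Sum>i\<in>{0..<4}. \<Sum>j\<in>{0..<4}. if E i j then 1 else 0) = (8::real)"
      unfolding card_Pset_sum .
    show ?thesis using h16 unfolding sum4 s by (simp only: d if_False add_0_left add_0_right)
  qed
  have cases: "(E 0 1 \<and> E 1 2 \<and> E 2 3 \<and> E 0 3 \<and> \<not> E 0 2 \<and> \<not> E 1 3) \<or>
               (E 0 2 \<and> E 1 2 \<and> E 1 3 \<and> E 0 3 \<and> \<not> E 0 1 \<and> \<not> E 2 3) \<or>
               (E 0 1 \<and> E 0 2 \<and> E 1 3 \<and> E 2 3 \<and> \<not> E 0 3 \<and> \<not> E 1 2)"
    by (rule cases6[OF cnt f6])
  show ?thesis
  proof -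
    from cases consider
      (c1) "E 0 1 \<and> E 1 2 \<and> E 2 3 \<and> E 0 3 \<and> \<not> E 0 2 \<and> \<not> E 1 3" |
      (c2) "E 0 2 \<and> E 1 2 \<and> E 1 3 \<and> E 0 3 \<and> \<not> E 0 1 \<and> \<not> E 2 3" |
      (c3) "E 0 1 \<and> E 0 2 \<and> E 1 3 \<and> E 2 3 \<and> \<not> E 0 3 \<and> \<not> E 1 2" by blast
    then show ?thesis
    proof cases
      case c1
      have "\<forall>i<4. \<forall>j<4. E i j \<longleftrightarrow> C4 (id i) (id j)"
        unfolding all_less4 using c1 s d by (simp add: C4_def)
      then show ?thesis unfolding isomorphic_C4_def by (intro conjI refl exI[of _ id]) auto
    next
      case c2
      let ?p = "\<lambda>i::nat. if i = 1 then 2 else if i = 2 then 1 else i"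
      have "\<forall>i<4. \<forall>j<4. E i j \<longleftrightarrow> C4 (?p i) (?p j)"
        unfolding all_less4 using c2 s d by (simp add: C4_def)
      moreover have "bij_betw ?p {0..<4} {0..<4}" by (rule swap_bij) auto
      ultimately show ?thesis unfolding isomorphic_C4_def by blast
    next
      case c3
      let ?p = "\<lambda>i::nat. if i = 2 then 3 else if i = 3 then 2 else i"
      have "\<forall>i<4. \<forall>j<4. E i j \<longleftrightarrow> C4 (?p i) (?p j)"
        unfolding all_less4 using c3 s d by (simp add: C4_def)
      moreover have "bij_betw ?p {0..<4} {0..<4}" by (rule swap_bij) auto
      ultimately show ?thesis unfolding isomorphic_C4_def by blast
    qed
  qed
qed


theorem mainTheorem13:
  fixes n :: nat and E :: "nat \<Rightarrow> nat \<Rightarrow> bool"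
  assumes "simple_graph n E" and "unicyclic n E" and "bipartite n E"
  shows "estrada_index n E \<ge> 2 * cosh 2 + (real n - 2)
    \<and> (estrada_index n E = 2 * cosh 2 + (real n - 2) \<longleftrightarrow> isomorphic_C4 n E)"
proof -
  note sg = assms(1) and uc = assms(2) and bp = assms(3)
  define A where "A = adj_matrix n E"
  note p = adj_props[OF sg, folded A_def]
  have n0: "n > 0" using uc unfolding unicyclic_def graph_connected_def by simp
  have c2n: "2 * n \<le> card (Pset n E)" by (rule unicyclic_card[OF sg uc])
  have cle: "card (Pset n E) \<le> n * n"
  proof -
    have "card (Pset n E) \<le> card ({0..<n} \<times> {0..<n})"
      unfolding Pset_def by (intro card_mono) auto
    then show ?thesis by simp
  qed
  have "\<exists>f::nat\<Rightarrow>bool. \<forall>i<n. \<forall>j<n. E i j \<longrightarrow> f i \<noteq> f j" using bp unfolding bipartite_def .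
  then obtain f :: "nat \<Rightarrow> bool" where f: "\<forall>i<n. \<forall>j<n. E i j \<longrightarrow> f i \<noteq> f j" ..
  obtain es where len: "length es = n"
    and pr: "proots (char_poly (map_mat complex_of_real A)) = mset es"
    and real: "\<And>e. e \<in> set es \<Longrightarrow> Im e = 0"
    and trs: "\<And>c N. tr ((A + c \<cdot>\<^sub>m 1\<^sub>m n) ^\<^sub>m N) = (\<Sum>i\<in>{0..<n}. (Re (es ! i) + c) ^ N)"
    using real_sym_spectrum[OF p(1) p(3)] by metis
  define l where "l i = Re (es ! i)" for i
  have esl: "es ! i = complex_of_real (l i)" if "i < n" for i
  proof -
    have "es ! i \<in> set es" using that len by simp
    then show ?thesis using real unfolding l_def by (simp add: complex_eq_iff)
  qed
  have EE: "estrada_index n E = (\<Sum>i\<in>{0..<n}. exp (l i))"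
  proof -
    have "(\<Sum>z\<in>#eigenvalues_mset A. exp z) = (\<Sum>z\<in>#mset es. exp z)"
      unfolding eigenvalues_mset_def pr ..
    also have "\<dots> = sum_list (map exp es)" by (metis mset_map sum_mset_sum_list)
    also have "\<dots> = (\<Sum>i\<in>{0..<n}. exp (es ! i))" using len by (simp add: sum_list_sum_nth atLeast0LessThan)
    also have "\<dots> = (\<Sum>i\<in>{0..<n}. complex_of_real (exp (l i)))"
      by (intro sum.cong refl) (simp add: esl exp_of_real)
    finally have "(\<Sum>z\<in>#eigenvalues_mset A. exp z) = complex_of_real (\<Sum>i\<in>{0..<n}. exp (l i))" by simp
    then show ?thesis unfolding estrada_index_def A_def[symmetric] by simp
  qed
  have A0: "A + 0 \<cdot>\<^sub>m 1\<^sub>m n = A" by (rule eq_matI) (use p(1) in auto)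
  have s0: "(\<Sum>i\<in>{0..<n}. l i) = 0"
  proof -
    have "tr ((A + 0 \<cdot>\<^sub>m 1\<^sub>m n) ^\<^sub>m 1) = tr A" unfolding A0 using pow_mat_one[OF p(1)] by simp
    then show ?thesis using trs[of 0 1] tr_adj(1)[OF sg] unfolding A_def l_def by simp
  qed
  have s2: "(\<Sum>i\<in>{0..<n}. (l i)\<^sup>2) = real (card (Pset n E))"
  proof -
    have "A ^\<^sub>m 2 = A * A" using p(1) by (simp add: numeral_2_eq_2)
    then have "tr ((A + 0 \<cdot>\<^sub>m 1\<^sub>m n) ^\<^sub>m 2) = tr (A * A)" unfolding A0 by simp
    then show ?thesis using trs[of 0 2] tr_adj(2)[OF sg] unfolding A_def l_def by simp
  qed
  have lbound: "\<bar>l i\<bar> \<le> real n" if "i < n" for i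
  proof -
    have "(l i)\<^sup>2 \<le> (\<Sum>i\<in>{0..<n}. (l i)\<^sup>2)" using that by (intro member_le_sum) auto
    also have "\<dots> \<le> real n * real n" using s2 cle by (metis of_nat_le_iff of_nat_mult)
    finally have "\<bar>l i\<bar>\<^sup>2 \<le> (real n)\<^sup>2" by (simp add: power2_eq_square)
    then show ?thesis by (rule power2_le_imp_le) simp
  qed
  have cP: "real (card (Pset n E)) \<ge> 2 * real n" using c2n by linarith
  have symM: "\<And>i j. i < n \<Longrightarrow> j < n \<Longrightarrow> (A + c \<cdot>\<^sub>m 1\<^sub>m n) $$ (i,j) = (A + c \<cdot>\<^sub>m 1\<^sub>m n) $$ (j,i)" for c
    using p(1,3) by auto
  have cM: "A + c \<cdot>\<^sub>m 1\<^sub>m n \<in> carrier_mat n n" for c using p(1) by simp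
  have sumn: "(\<Sum>i\<in>{0..<n}. ((\<lambda>_. 1::real) i)\<^sup>2) = real n" by simp
  have sums: "(\<Sum>i\<in>{0..<n}. ((\<lambda>i. if f i then 1 else -1::real) i)\<^sup>2) = real n"
  proof -
    have "(\<Sum>i\<in>{0..<n}. ((\<lambda>i. if f i then 1 else -1::real) i)\<^sup>2) = (\<Sum>i\<in>{0..<n}. (1::real))"
      by (intro sum.cong refl) simp
    then show ?thesis by simp
  qed
  obtain a where a: "a < n" "l a \<ge> 2"
  proof -
    have trp: "\<And>N. tr ((A + real n \<cdot>\<^sub>m 1\<^sub>m n) ^\<^sub>m N) = (\<Sum>i\<in>{0..<n}. (l i + real n) ^ N)"
      using trs unfolding l_def by simp
    obtain a where a: "a < n" and ra: "\<bar>l a + real n\<bar> \<ge> \<bar>Qf n (A + real n \<cdot>\<^sub>m 1\<^sub>m n) (\<lambda>_. 1)\<bar> / real n"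
      using rayleigh_power[OF cM symM trp, of "\<lambda>_. 1"] n0 sumn by auto
    have "Qf n (A + real n \<cdot>\<^sub>m 1\<^sub>m n) (\<lambda>_. 1) = real (card (Pset n E)) + real n * real n"
      using qf_shift[OF p(1), of "real n" "\<lambda>_. 1"] qf_adj[OF sg] unfolding A_def by simp
    then have "\<bar>l a + real n\<bar> \<ge> (real (card (Pset n E)) + real n * real n) / real n" using ra by simp
    moreover have "(real (card (Pset n E)) + real n * real n) / real n \<ge> 2 + real n"
      using cP n0 by (simp add: field_simps)
    moreover have "l a + real n \<ge> 0" using lbound[OF a] by linarith
    ultimately have "l a \<ge> 2" by linarith
    then show ?thesis using that a by blast
  qed
  obtain b where b: "b < n" "l b \<le> -2"
  proof -
    have trp: "\<And>N. tr ((A + (- real n) \<cdot>\<^sub>m 1\<^sub>m n) ^\<^sub>m N) = (\<Sum>i\<in>{0..<n}. (l i + - real n) ^ N)"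
      using trs unfolding l_def by simp
    let ?s = "\<lambda>i. if f i then 1 else -1::real"
    obtain b where b: "b < n" and rb: "\<bar>l b + - real n\<bar> \<ge> \<bar>Qf n (A + (- real n) \<cdot>\<^sub>m 1\<^sub>m n) ?s\<bar> / real n"
      using rayleigh_power[OF cM symM trp, of ?s] n0 sums by auto
    have "Qf n (A + (- real n) \<cdot>\<^sub>m 1\<^sub>m n) ?s = - real (card (Pset n E)) - real n * real n"
      using qf_shift[OF p(1), of "- real n" ?s] qf_adj_sign[OF sg f] sums unfolding A_def by simp
    moreover have "\<bar>- real (card (Pset n E)) - real n * real n\<bar> = real (card (Pset n E)) + real n * real n"
    proof -
      have "0 \<le> real (card (Pset n E)) + real n * real n" by simp
      then show ?thesis by (smt (verit))
    qed
    ultimately have "\<bar>l b - real n\<bar> \<ge> (real (card (Pset n E)) + real n * real n) / real n" using rb by simp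
    moreover have "(real (card (Pset n E)) + real n * real n) / real n \<ge> 2 + real n"
      using cP n0 by (simp add: field_simps)
    moreover have "l b - real n \<le> 0" using lbound[OF b] by linarith
    ultimately have "l b \<le> -2" by linarith
    then show ?thesis using that b by blast
  qed
  note eb = ee_bound[OF a(1) b(1) a(2) b(2) s0]
  note sq = sq_char[OF a(1) b(1) a(2) b(2)]
  have iff8: "card (Pset n E) = 8 \<longleftrightarrow> isomorphic_C4 n E"
  proof
    assume c8: "card (Pset n E) = 8"
    then have "n \<le> 4" using c2n by simp
    moreover have "\<not> n \<le> 3" using small_card[OF sg] c8 by auto
    ultimately have n4: "n = 4" by simp
    show "isomorphic_C4 n E" using c4_char[of E] sg bp c8 unfolding n4 by simp
  next
    assume "isomorphic_C4 n E"
    then show "card (Pset n E) = 8" by (rule iso_card(2))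
  qed
  have "estrada_index n E = 2 * cosh 2 + (real n - 2) \<longleftrightarrow> (\<Sum>i\<in>{0..<n}. (l i)\<^sup>2) = 8"
    unfolding EE eb(2) sq(2) ..
  also have "\<dots> \<longleftrightarrow> card (Pset n E) = 8" unfolding s2 by linarith
  finally show ?thesis using eb(1) iff8 unfolding EE by simp
qed

end
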